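(* Let $n\ge1$, identify $\mathbb{R}^{n+1}=\mathbb{R}^n\times\mathbb{R}$, and let $K\subset\mathbb{R}^{n+1}$ be a convex compact set. Suppose there exist $x_1\in\mathbb{R}^n$ and real numbers $0<y_1<y_2$ such that $(x_1,y_1)\notin K$ and $(x_1,y_2)\in K$. Then there exist a positive-valued convex (hence continuous) function $f\colon\mathbb{R}^n\to\mathbb{R}$ and a point $x_2\in\mathbb{R}^n$ such that the epigraph $L=\{(x,y)\mid f(x)\le y\}$ is disjoint from $K$ and the vertical line through $x_2$ contains at least two distinct points of the equidistant set $\{K=L\}=\{p\mid d(p,K)=d(p,L)\}$.
   Context: $d(p,A)=\inf\{|p-q|\mid q\in A\}$ (Euclidean distance). *)

theory Defs
  imports "HOL-Analysis.Analysis"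
begin

definition epigraph_set :: "('a \<Rightarrow> real) \<Rightarrow> ('a \<times> real) set" where
  "epigraph_set f = {(x, y). f x \<le> y}"

definition equidistant_set :: "('b::metric_space) set \<Rightarrow> 'b set \<Rightarrow> 'b set" where
  "equidistant_set K L = {p. infdist p K = infdist p L}"

end

theory Submission
  imports Defs
begin

lemma convex_max_affine:
  fixes u :: "'a::euclidean_space"
  shows "convex_on UNIV (\<lambda>x. max (e::real) (A + s * (inner u w - inner u x)))"
proof (rule convex_onI)
  fix t :: real and x y :: 'a
  assume t: "0 < t" "t < 1"
  define hx where "hx = A + s * (inner u w - inner u x)"
  define hy where "hy = A + s * (inner u w - inner u y)"
  have h: "A + s * (inner u w - inner u ((1 - t) *\<^sub>R x + t *\<^sub>R y)) = (1 - t) * hx + t * hy"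
    unfolding hx_def hy_def by (simp add: inner_add_right algebra_simps)
  have "max e ((1 - t) * hx + t * hy) \<le> (1 - t) * max e hx + t * max e hy"
  proof -
    have a: "(1 - t) * hx \<le> (1 - t) * max e hx" using t by (intro mult_left_mono) auto
    have b: "t * hy \<le> t * max e hy" using t by (intro mult_left_mono) auto
    have c: "(1 - t) * e \<le> (1 - t) * max e hx" using t by (intro mult_left_mono) auto
    have d: "t * e \<le> t * max e hy" using t by (intro mult_left_mono) auto
    have "e = (1 - t) * e + t * e" by (simp add: algebra_simps)
    then show ?thesis using a b c d by linarith
  qed
  then show "max e (A + s * (inner u w - inner u ((1 - t) *\<^sub>R x + t *\<^sub>R y)))
     \<le> (1 - t) * max e (A + s * (inner u w - inner u x)) + t * max e (A + s * (inner u w - inner u y))"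
    unfolding h hx_def hy_def by simp
qed simp

theorem theorem4:
  fixes K :: "('a::euclidean_space \<times> real) set"
    and x1 :: 'a and y1 y2 :: real
  assumes "convex K" and "compact K"
    and "0 < y1" and "y1 < y2"
    and "(x1, y1) \<notin> K" and "(x1, y2) \<in> K"
  shows "\<exists>(f :: 'a \<Rightarrow> real) x2.
           (\<forall>x. 0 < f x) \<and> convex_on UNIV f \<and>
           epigraph_set f \<inter> K = {} \<and>
           (\<exists>y y'. y \<noteq> y' \<and>
              (x2, y) \<in> equidistant_set K (epigraph_set f) \<and>
              (x2, y') \<in> equidistant_set K (epigraph_set f))"
proof -
  have clK: "closed K" using assms(2) by (simp add: compact_imp_closed)
  have neK: "K \<noteq> {}" using assms(6) by auto
  obtain a b where ab: "inner a (x1, y1) < b" "\<forall>z\<in>K. inner a z > b"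
    using separating_hyperplane_closed_point[OF assms(1) clK assms(5)] by blast
  obtain a1 a2 where a12: "a = (a1, a2)" by (cases a)
  have s1: "inner a1 x1 + a2 * y1 < b" using ab(1) a12 by simp
  have s2: "\<And>x y. (x, y) \<in> K \<Longrightarrow> inner a1 x + a2 * y > b" using ab(2) a12 by fastforce
  have "inner a1 x1 + a2 * y2 > b" using s2[OF assms(6)] .
  then have "a2 * (y2 - y1) > 0" using s1 by (simp add: algebra_simps)
  then have a2pos: "a2 > 0" using assms(4) by (simp add: zero_less_mult_iff)
  obtain u :: 'a where u: "u \<noteq> 0" "a1 \<noteq> 0 \<Longrightarrow> u = - a1"
  proof (cases "a1 = 0")
    case True
    obtain v :: 'a where "v \<in> Basis" using nonempty_Basis by blast
    then have "v \<noteq> 0" by auto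
    then show ?thesis using that True by blast
  next
    case False then show ?thesis using that[of "-a1"] by auto
  qed
  have "\<exists>z\<in>K. \<forall>w\<in>K. inner u (fst w) \<le> inner u (fst z)"
    by (rule continuous_attains_sup[OF assms(2) neK]) (intro continuous_intros)
  then obtain x2 y' where x2K: "(x2, y') \<in> K" and x2max: "\<And>x y. (x, y) \<in> K \<Longrightarrow> inner u x \<le> inner u x2"
    by fastforce
  have "inner a1 x2 \<le> inner a1 x1"
  proof (cases "a1 = 0")
    case True then show ?thesis by simp
  next
    case False
    have "inner u x1 \<le> inner u x2" using x2max[OF assms(6)] .
    then show ?thesis using u(2)[OF False] by simp
  qed
  then have p1notK: "(x2, y1) \<notin> K" using s2 s1 by force
  have "inner a1 x2 + a2 * y' > b" using s2[OF x2K] .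
  then have "a2 * (y' - y1) > 0" using s1 \<open>inner a1 x2 \<le> inner a1 x1\<close> by (simp add: algebra_simps)
  then have y'gt: "y' > y1" using a2pos by (simp add: zero_less_mult_iff)
  have "\<exists>z\<in>K. \<forall>w\<in>K. snd w \<le> snd z"
    by (rule continuous_attains_sup[OF assms(2) neK]) (intro continuous_intros)
  then obtain Y where Y: "\<And>x y. (x, y) \<in> K \<Longrightarrow> y \<le> Y" by fastforce
  define C where "C = \<bar>Y\<bar> + y1 + 1"
  have CK: "\<And>x y. (x, y) \<in> K \<Longrightarrow> y < C" using Y assms(3) unfolding C_def by force
  have Cy1: "C > y1" unfolding C_def by simp
  define \<delta> where "\<delta> = infdist (x2, y1) K"
  have \<delta>pos: "\<delta> > 0" unfolding \<delta>_def using infdist_pos_not_in_closed[OF clK neK p1notK] .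
  define t where "t = \<delta> / (2 * norm u)"
  have tpos: "t > 0" unfolding t_def using \<delta>pos u(1) by simp
  define s where "s = (C - y1) / (t * (norm u)^2)"
  have spos: "s > 0" unfolding s_def using Cy1 tpos u(1) by simp
  define f where "f = (\<lambda>x. max y1 (C + s * (inner u x2 - inner u x)))"
  define L where "L = epigraph_set f"
  have fpos: "\<forall>x. 0 < f x" unfolding f_def using assms(3) by (simp add: less_max_iff_disj)
  have fconv: "convex_on UNIV f" unfolding f_def by (rule convex_max_affine)
  have disj: "L \<inter> K = {}"
  proof (rule ccontr)
    assume "L \<inter> K \<noteq> {}"
    then obtain x y where xy: "(x, y) \<in> L" "(x, y) \<in> K" by auto
    have "inner u x \<le> inner u x2" using x2max[OF xy(2)] .
    then have "0 \<le> s * (inner u x2 - inner u x)" using spos by simp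
    then have "C \<le> f x" unfolding f_def by (simp add: le_max_iff_disj)
    moreover have "f x \<le> y" using xy(1) unfolding L_def epigraph_set_def by simp
    ultimately show False using CK[OF xy(2)] by simp
  qed
  have contf: "continuous_on UNIV f" unfolding f_def by (intro continuous_intros)
  have clL: "closed L"
  proof -
    have "closed {p :: 'a \<times> real. f (fst p) \<le> snd p}"
    proof (rule closed_Collect_le)
      show "continuous_on UNIV (\<lambda>p :: 'a \<times> real. f (fst p))"
        by (rule continuous_on_compose2[OF contf]) (auto intro: continuous_intros)
      have "continuous_on UNIV (\<lambda>p :: 'a \<times> real. snd p)" by (intro continuous_intros)
      then show "continuous_on UNIV (snd :: 'a \<times> real \<Rightarrow> real)" .
    qed
    moreover have "L = {p. f (fst p) \<le> snd p}" unfolding L_def epigraph_set_def by auto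
    ultimately show ?thesis by simp
  qed
  have fx2: "f x2 = C" unfolding f_def using Cy1 by simp
  have CL: "(x2, C) \<in> L" unfolding L_def epigraph_set_def using fx2 by simp
  have neL: "L \<noteq> {}" using CL by auto
  define g where "g = (\<lambda>y. infdist (x2, y) K - infdist (x2, y) L)"
  have contg: "continuous_on UNIV g" unfolding g_def by (intro continuous_intros)
  have gC: "g C > 0"
  proof -
    have "(x2, C) \<notin> K" using CK by force
    then have "infdist (x2, C) K > 0" using infdist_pos_not_in_closed[OF clK neK] by blast
    then show ?thesis unfolding g_def using CL by simp
  qed
  have gy': "g y' < 0"
  proof -
    have "(x2, y') \<notin> L" using disj x2K by blast
    then have "infdist (x2, y') L > 0" using infdist_pos_not_in_closed[OF clL neL] by blast
    then show ?thesis unfolding g_def using x2K by simp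
  qed
  have gy1: "g y1 > 0"
  proof -
    define q where "q = (x2 + t *\<^sub>R u, y1)"
    have "f (x2 + t *\<^sub>R u) = y1"
    proof -
      have "s * (inner u x2 - inner u (x2 + t *\<^sub>R u)) = - s * t * (norm u)^2"
        by (simp add: inner_add_right power2_norm_eq_inner)
      also have "\<dots> = - (C - y1)" unfolding s_def using tpos u(1) by simp
      finally show ?thesis unfolding f_def by simp
    qed
    then have "q \<in> L" unfolding q_def L_def epigraph_set_def by simp
    then have "infdist (x2, y1) L \<le> dist (x2, y1) q" by (rule infdist_le)
    also have "\<dots> = t * norm u" unfolding q_def using tpos by (simp add: dist_Pair_Pair dist_norm)
    also have "\<dots> = \<delta> / 2" unfolding t_def using u(1) by simp
    finally show ?thesis unfolding g_def \<delta>_def[symmetric] using \<delta>pos by simp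
  qed
  have "y' < C" using CK[OF x2K] .
  obtain z1 where z1: "z1 \<ge> y1" "z1 \<le> y'" "g z1 = 0"
    using IVT2'[of g y' 0 y1] gy1 gy' y'gt contg by (force intro: continuous_on_subset)
  obtain z2 where z2: "z2 \<ge> y'" "z2 \<le> C" "g z2 = 0"
    using IVT'[of g y' 0 C] gC gy' \<open>y' < C\<close> contg by (force intro: continuous_on_subset)
  have "z1 \<noteq> z2" using z1 z2 gy' by (metis order_antisym less_irrefl)
  moreover have "(x2, z1) \<in> equidistant_set K L" "(x2, z2) \<in> equidistant_set K L"
    using z1(3) z2(3) unfolding g_def equidistant_set_def by auto
  ultimately show ?thesis using fpos fconv disj unfolding L_def by blast
qed

end
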